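(* $\nabla\varphi(U)=\mathbb{R}^2\setminus\bigcup_{i=1}^n C_{p_i}$.
   Context: $n\ge3$; $p_1,\dots,p_n\in\mathbb{R}^2_{(u_1,u_2)}$ are distinct vertices, in counterclockwise order, of a convex polygon with interior $U$; indices mod $n$. $A\ge0$, $V(u)=A+\sum_i\frac{1}{2|u-p_i|}$. For $b_1,\dots,b_n\in\mathbb{R}$, $\varphi:\overline U\to\mathbb{R}$ is the unique continuous convex function, smooth in $U$, with $\det D^2\varphi=V$ in $U$, $\varphi(p_i)=b_i$, and $\varphi$ affine linear on each edge $[p_i,p_{i+1}]$. The subgradient set at a vertex is $C_{p_i}=\{y\in\mathbb{R}^2:\varphi(u)-\varphi(p_i)\ge\langle y,u-p_i\rangle\ \forall u\in\overline U\}$. *)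

theory Defs
  imports "HOL-Analysis.Analysis"
begin

type_synonym pt = "real^2"

definition cross2 :: "pt \<Rightarrow> pt \<Rightarrow> real" where
  "cross2 x y = x$1 * y$2 - x$2 * y$1"

text \<open>p 0, ..., p (n-1) are distinct vertices, in counterclockwise order, of a convex
  polygon: every other vertex lies strictly to the left of each directed edge
  p i -> p ((i+1) mod n).\<close>
definition ccw_convex_polygon :: "nat \<Rightarrow> (nat \<Rightarrow> pt) \<Rightarrow> bool" where
  "ccw_convex_polygon n p \<longleftrightarrow> 3 \<le> n \<and> inj_on p {..<n} \<and>
     (\<forall>i<n. \<forall>j<n. j \<noteq> i \<and> j \<noteq> Suc i mod n \<longrightarrow>
        cross2 (p (Suc i mod n) - p i) (p j - p i) > 0)"

definition pderiv2 :: "(pt \<Rightarrow> real) \<Rightarrow> 2 \<Rightarrow> pt \<Rightarrow> real" where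
  "pderiv2 f i x = frechet_derivative f (at x) (axis i 1)"

definition grad2 :: "(pt \<Rightarrow> real) \<Rightarrow> pt \<Rightarrow> pt" where
  "grad2 f x = (\<chi> i. pderiv2 f i x)"

definition hessian2 :: "(pt \<Rightarrow> real) \<Rightarrow> pt \<Rightarrow> real^2^2" where
  "hessian2 f x = (\<chi> i j. pderiv2 (pderiv2 f j) i x)"

fun Ck_on :: "nat \<Rightarrow> (pt \<Rightarrow> real) \<Rightarrow> pt set \<Rightarrow> bool" where
  "Ck_on 0 f S = continuous_on S f"
| "Ck_on (Suc k) f S = ((\<forall>x\<in>S. f differentiable (at x)) \<and> (\<forall>i. Ck_on k (pderiv2 f i) S))"

definition smooth_on :: "(pt \<Rightarrow> real) \<Rightarrow> pt set \<Rightarrow> bool" where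
  "smooth_on f S \<longleftrightarrow> (\<forall>k. Ck_on k f S)"

definition subgrad_set :: "(pt \<Rightarrow> real) \<Rightarrow> pt set \<Rightarrow> pt \<Rightarrow> pt set" where
  "subgrad_set f K q = {y. \<forall>u\<in>K. f u - f q \<ge> inner y (u - q)}"

end

theory Submission
  imports Defs
begin
lemma lin_inner2:
  fixes f :: "real^2 \<Rightarrow> real"
  assumes "linear f"
  shows "f h = (\<chi> i. f (axis i 1)) \<bullet> h"
proof -
  have "f h = f (\<Sum>i\<in>UNIV. (h$i) *s axis i 1)" by (simp add: basis_expansion)
  also have "\<dots> = (\<Sum>i\<in>UNIV. h$i * f (axis i 1))"
    using assms by (simp add: linear_sum linear_cmul scalar_mult_eq_scaleR)
  finally show ?thesis by (simp add: inner_vec_def mult.commute)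
qed

lemma grad_deriv:
  assumes "\<phi> differentiable (at u)"
  shows "(\<phi> has_derivative (\<lambda>h. grad2 \<phi> u \<bullet> h)) (at u)"
proof -
  have d: "(\<phi> has_derivative frechet_derivative \<phi> (at u)) (at u)"
    using assms frechet_derivative_works by blast
  have "frechet_derivative \<phi> (at u) = (\<lambda>h. grad2 \<phi> u \<bullet> h)"
    unfolding grad2_def pderiv2_def by (rule ext, rule lin_inner2[OF has_derivative_linear[OF d]])
  with d show ?thesis by simp
qed

lemma interior_min:
  assumes "open U" "u \<in> U" "U \<subseteq> K" "\<phi> differentiable (at u)"
    and mn: "\<forall>x\<in>K. \<phi> u - y \<bullet> u \<le> \<phi> x - y \<bullet> x"
  shows "grad2 \<phi> u = y"
proof -
  have "((\<lambda>x. \<phi> x - y \<bullet> x) has_derivative (\<lambda>h. grad2 \<phi> u \<bullet> h - y \<bullet> h)) (at u)"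
    by (intro derivative_intros grad_deriv assms)
  moreover have "eventually (\<lambda>x. \<phi> u - y \<bullet> u \<le> \<phi> x - y \<bullet> x) (at u)"
  proof -
    have "eventually (\<lambda>x. x \<in> U) (at u)" using assms(1,2) eventually_at_topological by blast
    then show ?thesis by eventually_elim (use mn assms(3) in auto)
  qed
  ultimately have "(\<lambda>h. grad2 \<phi> u \<bullet> h - y \<bullet> h) = (\<lambda>h. 0)"
    by (rule has_derivative_local_min)
  then have "grad2 \<phi> u \<bullet> (grad2 \<phi> u - y) - y \<bullet> (grad2 \<phi> u - y) = 0" by metis
  then have "(grad2 \<phi> u - y) \<bullet> (grad2 \<phi> u - y) = 0" by (simp add: inner_diff_left)
  then show ?thesis by simp
qed


lemma lc_aux: fixes u w :: "real^2" shows "u + ((1 - s) * a + s * b) *\<^sub>R w = (1 - s) *\<^sub>R (u + a *\<^sub>R w) + s *\<^sub>R (u + b *\<^sub>R w)"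
proof -
  have e: "(1 - s) *\<^sub>R u + s *\<^sub>R u = u" by (metis add.commute diff_add_cancel scaleR_add_left scaleR_one)
  have "(1 - s) *\<^sub>R (u + a *\<^sub>R w) + s *\<^sub>R (u + b *\<^sub>R w) = ((1 - s) *\<^sub>R u + s *\<^sub>R u) + ((1 - s) * a + s * b) *\<^sub>R w"
    by (simp add: scaleR_add_right scaleR_add_left)
  then show ?thesis using e by simp
qed

lemma tangent:
  assumes "open U" "u \<in> U" "U \<subseteq> K" "convex K" "convex_on K \<phi>"
    "\<phi> differentiable (at u)" "grad2 \<phi> u = y" "x \<in> K"
  shows "\<phi> u - y \<bullet> u \<le> \<phi> x - y \<bullet> x"
proof -
  define l where "l t = u + t *\<^sub>R (x - u)" for t
  define g where "g t = \<phi> (l t) - y \<bullet> l t" for t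
  define A where "A = {t. l t \<in> K}"
  have lc: "l ((1 - s) * a + s * b) = (1 - s) *\<^sub>R l a + s *\<^sub>R l b" for s a b
    unfolding l_def by (rule lc_aux)
  have convA: "convex A"
  proof (unfold convex_alt, intro ballI allI impI)
    fix a b and s :: real assume "a \<in> A" "b \<in> A" "0 \<le> s \<and> s \<le> 1"
    then have "(1 - s) *\<^sub>R l a + s *\<^sub>R l b \<in> K"
      using assms(4) unfolding A_def convex_alt by blast
    then show "(1 - s) *\<^sub>R a + s *\<^sub>R b \<in> A" unfolding A_def using lc[of s a b] by simp
  qed
  have "convex_on A g"
  proof (rule convex_onI[OF _ convA])
    fix t a b :: real assume t: "0 < t" "t < 1" "a \<in> A" "b \<in> A"
    have "\<phi> (l ((1 - t) * a + t * b)) \<le> (1 - t) * \<phi> (l a) + t * \<phi> (l b)"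
      unfolding lc using convex_onD[OF assms(5)] t unfolding A_def by auto
    moreover have "y \<bullet> l ((1 - t) * a + t * b) = (1 - t) * (y \<bullet> l a) + t * (y \<bullet> l b)"
      unfolding lc by (simp add: inner_add_right)
    ultimately show "g ((1 - t) *\<^sub>R a + t *\<^sub>R b) \<le> (1 - t) * g a + t * g b"
      unfolding g_def by (simp add: algebra_simps)
  qed
  moreover have "connected A" using convA convex_connected by blast
  moreover have "0 \<in> interior A"
  proof -
    have o: "open (l -` U)" unfolding l_def
      by (intro open_vimage assms(1)) (auto intro!: continuous_intros)
    have z: "0 \<in> l -` U" using assms(2) by (simp add: l_def)
    have s: "l -` U \<subseteq> A" using assms(3) by (auto simp: A_def)
    have "l -` U \<subseteq> interior A" by (rule interior_maximal[OF s o])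
    then show ?thesis using z by blast
  qed
  moreover have "1 \<in> A" using assms(8) by (simp add: A_def l_def)
  moreover have "(g has_field_derivative 0) (at 0 within A)"
  proof -
    have dl: "(l has_derivative (\<lambda>t. t *\<^sub>R (x - u))) (at 0)"
      unfolding l_def[abs_def] by (auto intro!: derivative_eq_intros)
    moreover have "(\<phi> has_derivative (\<lambda>h. grad2 \<phi> u \<bullet> h)) (at (l 0))"
      using grad_deriv[OF assms(6)] by (simp add: l_def)
    ultimately have d1: "((\<lambda>t. \<phi> (l t)) has_derivative (\<lambda>t. grad2 \<phi> u \<bullet> (t *\<^sub>R (x - u)))) (at 0)"
      by (rule has_derivative_compose)
    have d2: "((\<lambda>t. y \<bullet> l t) has_derivative (\<lambda>t. y \<bullet> (t *\<^sub>R (x - u)))) (at 0)"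
      by (rule bounded_linear.has_derivative[OF bounded_linear_inner_right dl])
    have "(g has_derivative (\<lambda>t. grad2 \<phi> u \<bullet> (t *\<^sub>R (x - u)) - y \<bullet> (t *\<^sub>R (x - u)))) (at 0)"
      unfolding g_def[abs_def] by (rule has_derivative_diff[OF d1 d2])
    moreover have "(\<lambda>t. grad2 \<phi> u \<bullet> (t *\<^sub>R (x - u)) - y \<bullet> (t *\<^sub>R (x - u))) = (\<lambda>t. 0 * t)"
      using assms(7) by simp
    ultimately have gd: "(g has_derivative (\<lambda>t. 0 * t)) (at 0)" by (simp only:)
    show ?thesis unfolding has_field_derivative_def
      by (rule has_derivative_at_withinI[OF gd])
  qed
  ultimately have "g 1 - g 0 \<ge> 0 * (1 - 0)"
    by (rule convex_on_imp_above_tangent)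
  then show ?thesis by (simp add: g_def l_def)
qed

lemma cross_perp:
  fixes a v w :: "real^2"
  assumes "a \<noteq> 0" "a \<bullet> v = 0" "a \<bullet> w = 0"
  shows "cross2 v w = 0"
proof -
  have h1: "a$1 * v$1 + a$2 * v$2 = 0" "a$1 * w$1 + a$2 * w$2 = 0"
    using assms(2,3) by (simp_all add: inner_vec_def sum_2)
  have "a$1 \<noteq> 0 \<or> a$2 \<noteq> 0" using assms(1) by (metis exhaust_2 vec_eq_iff zero_index)
  moreover have "a$1 * (v$1 * w$2 - v$2 * w$1) = 0"
  proof -
    have "a$1 * (v$1 * w$2 - v$2 * w$1) = (a$1 * v$1 + a$2 * v$2) * w$2 - (a$1 * w$1 + a$2 * w$2) * v$2"
      by (simp add: algebra_simps)
    then show ?thesis using h1 by simp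
  qed
  moreover have "a$2 * (v$1 * w$2 - v$2 * w$1) = 0"
  proof -
    have "a$2 * (v$1 * w$2 - v$2 * w$1) = (a$1 * w$1 + a$2 * w$2) * v$1 - (a$1 * v$1 + a$2 * v$2) * w$1"
      by (simp add: algebra_simps)
    then show ?thesis using h1 by simp
  qed
  ultimately show ?thesis by (auto simp: cross2_def)
qed

lemma poly_facts:
  assumes "ccw_convex_polygon n p"
  shows "3 \<le> n" "inj_on p {..<n}"
    "\<And>i j. i < n \<Longrightarrow> j < n \<Longrightarrow> j \<noteq> i \<Longrightarrow> j \<noteq> Suc i mod n \<Longrightarrow>
        cross2 (p (Suc i mod n) - p i) (p j - p i) > 0"
  using assms unfolding ccw_convex_polygon_def by auto

lemma suc_mod_ne:
  assumes "3 \<le> n" "k < n" shows "Suc k mod n \<noteq> k" "Suc k mod n < n"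
proof -
  show "Suc k mod n < n" using assms by simp
  show "Suc k mod n \<noteq> k"
  proof (cases "Suc k < n")
    case True then show ?thesis by simp
  next
    case False then have "Suc k = n" using assms by simp
    then show ?thesis using assms by simp
  qed
qed

lemma vertex_not_interior:
  assumes poly: "ccw_convex_polygon n p" and k: "k < n"
  shows "p k \<notin> interior (convex hull (p ` {..<n}))"
proof
  assume int: "p k \<in> interior (convex hull (p ` {..<n}))"
  note pf = poly_facts[OF poly]
  define k1 where "k1 = Suc k mod n"
  have k1n: "k1 < n" "k1 \<noteq> k" using suc_mod_ne[OF pf(1) k] by (auto simp: k1_def)
  define e where "e = p k1 - p k"
  have "e \<noteq> 0" using pf(2) k k1n unfolding e_def inj_on_def by auto
  define nv :: "real^2" where "nv = vector [-(e$2), e$1]"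
  have ci: "nv \<bullet> w = cross2 e w" for w by (simp add: nv_def inner_vec_def sum_2 cross2_def)
  have nv0: "nv \<noteq> 0"
  proof
    assume "nv = 0"
    then have "e$1 = 0" "e$2 = 0" using ci[of "axis 1 1"] ci[of "axis 2 1"]
      by (auto simp: cross2_def axis_def)
    then have "e = 0" by (metis exhaust_2 vec_eq_iff zero_index)
    then show False using \<open>e \<noteq> 0\<close> by simp
  qed
  have ge: "nv \<bullet> p j \<ge> nv \<bullet> p k" if "j < n" for j
  proof -
    have "cross2 e (p j - p k) \<ge> 0"
    proof (cases "j = k \<or> j = k1")
      case True then show ?thesis by (auto simp: e_def cross2_def)
    next
      case False then show ?thesis using pf(3)[OF k that] by (auto simp: e_def k1_def less_imp_le)
    qed
    then show ?thesis using ci[of "p j - p k"] by (simp add: inner_diff_right)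
  qed
  have "convex hull (p ` {..<n}) \<subseteq> {x. nv \<bullet> x \<ge> nv \<bullet> p k}"
    by (rule hull_minimal) (use ge in \<open>auto simp: convex_halfspace_ge\<close>)
  then have "interior (convex hull (p ` {..<n})) \<subseteq> interior {x. nv \<bullet> x \<ge> nv \<bullet> p k}"
    by (rule interior_mono)
  also have "\<dots> = {x. nv \<bullet> x > nv \<bullet> p k}" using nv0 by simp
  finally show False using int by auto
qed

lemma adj_aux:
  fixes a1 a2 w1 w2 e1 e2 f1 f2 :: real
  assumes "a1*w1 + a2*w2 = 0" "a1*e1+a2*e2 \<ge> 0" "a1*f1+a2*f2 \<ge> 0"
    "e1*w2 - e2*w1 > 0" "f1*(-w2) - f2*(-w1) > 0" "a1 \<noteq> 0 \<or> a2 \<noteq> 0"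
  shows False
proof -
  define P where "P = e1*w2 - e2*w1"
  define Q where "Q = f1*(-w2) - f2*(-w1)"
  define E where "E = a1*e1+a2*e2"
  define F where "F = a1*f1+a2*f2"
  have "a1 * P = w2 * E"
  proof -
    have "a1 * (e1*w2 - e2*w1) - w2 * (a1*e1+a2*e2) = - e2 * (a1*w1 + a2*w2)" by (simp add: algebra_simps)
    then show ?thesis using assms(1) unfolding P_def E_def by simp
  qed
  moreover have "a1 * Q = - w2 * F"
  proof -
    have "a1 * (f1*(-w2) - f2*(-w1)) + w2 * (a1*f1+a2*f2) = f2 * (a1*w1 + a2*w2)" by (simp add: algebra_simps)
    then show ?thesis using assms(1) unfolding Q_def F_def by simp
  qed
  moreover have "a2 * P = - w1 * E"
  proof -
    have "a2 * (e1*w2 - e2*w1) + w1 * (a1*e1+a2*e2) = e1 * (a1*w1 + a2*w2)" by (simp add: algebra_simps)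
    then show ?thesis using assms(1) unfolding P_def E_def by simp
  qed
  moreover have "a2 * Q = w1 * F"
  proof -
    have "a2 * (f1*(-w2) - f2*(-w1)) - w1 * (a1*f1+a2*f2) = - f1 * (a1*w1 + a2*w2)" by (simp add: algebra_simps)
    then show ?thesis using assms(1) unfolding Q_def F_def by simp
  qed
  ultimately have "a1 * (P * F + Q * E) = 0" "a2 * (P * F + Q * E) = 0"
    by (simp_all add: algebra_simps)
  then have "P * F + Q * E = 0" using assms(6) by auto
  moreover have "P > 0" "Q > 0" "E \<ge> 0" "F \<ge> 0" using assms unfolding P_def Q_def E_def F_def by auto
  ultimately have "E = 0" "F = 0"
    by (smt (verit) mult_nonneg_nonneg mult_pos_pos zero_less_mult_iff)+
  then have "a1 * P = 0" "a2 * P = 0" using \<open>a1 * P = w2 * E\<close> \<open>a2 * P = - w1 * E\<close> by auto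
  then show False using \<open>P > 0\<close> assms(6) by auto
qed


lemma boundary_edge:
  assumes poly: "ccw_convex_polygon n p"
    and mK: "m \<in> convex hull (p ` {..<n})"
    and mI: "m \<notin> interior (convex hull (p ` {..<n}))"
    and ne: "interior (convex hull (p ` {..<n})) \<noteq> {}"
  shows "\<exists>i<n. m \<in> closed_segment (p i) (p (Suc i mod n))"
proof -
  note pf = poly_facts[OF poly]
  define P where "P = p ` {..<n}"
  define K where "K = convex hull P"
  have finP: "finite P" unfolding P_def by simp
  have cK: "convex K" unfolding K_def by simp
  have compK: "compact K" unfolding K_def using finP by (simp add: compact_convex_hull finite_imp_compact)
  then have clK: "closure K = K" by (simp add: compact_imp_closed)
  have riK: "rel_interior K = interior K" using ne unfolding K_def P_def by (rule rel_interior_nonempty_interior)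
  have mc: "m \<in> closure K" using mK clK unfolding K_def P_def by simp
  have mr: "m \<notin> rel_interior K" using mI riK unfolding K_def P_def by simp
  obtain a where a0: "a \<noteq> 0" and amin: "\<And>y. y \<in> closure K \<Longrightarrow> a \<bullet> m \<le> a \<bullet> y"
    and "\<And>y. y \<in> rel_interior K \<Longrightarrow> a \<bullet> m < a \<bullet> y"
    using supporting_hyperplane_relative_frontier[OF cK mc mr] by blast
  define c where "c = a \<bullet> m"
  have geK: "\<And>x. x \<in> K \<Longrightarrow> a \<bullet> x \<ge> c" using amin clK unfolding c_def by auto
  have pK: "p j \<in> K" if "j < n" for j using that unfolding K_def P_def by (simp add: hull_inc)
  have face: "(K \<inter> {x. a \<bullet> x = c}) face_of K"
    by (rule face_of_Int_supporting_hyperplane_ge[OF cK]) (use geK in auto)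
  obtain S' where S': "S' \<subseteq> P" "K \<inter> {x. a \<bullet> x = c} = convex hull S'"
    using face_of_convex_hull_subset[of P "K \<inter> {x. a \<bullet> x = c}"] face finP
    unfolding K_def by (auto simp: finite_imp_compact)
  define J where "J = {j. j < n \<and> a \<bullet> p j = c}"
  have "S' \<subseteq> p ` J"
  proof
    fix x assume x: "x \<in> S'"
    then obtain j where j: "j < n" "x = p j" using S'(1) unfolding P_def by auto
    have "x \<in> convex hull S'" using x by (simp add: hull_inc)
    then have "a \<bullet> x = c" using S'(2) by auto
    then show "x \<in> p ` J" using j unfolding J_def by auto
  qed
  moreover have "m \<in> convex hull S'" using S'(2) mK unfolding K_def P_def c_def by auto
  ultimately have mJ: "m \<in> convex hull (p ` J)" using hull_mono by blast
  have adj: "k = Suc j mod n \<or> j = Suc k mod n" if "j \<in> J" "k \<in> J" "j \<noteq> k" for j k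
  proof (rule ccontr)
    assume nadj: "\<not> (k = Suc j mod n \<or> j = Suc k mod n)"
    have jk: "j < n" "k < n" "a \<bullet> p j = c" "a \<bullet> p k = c" using that unfolding J_def by auto
    define w where "w = p k - p j"
    define e where "e = p (Suc j mod n) - p j"
    define f where "f = p (Suc k mod n) - p k"
    have "a \<bullet> w = 0" using jk unfolding w_def by (simp add: inner_diff_right)
    moreover have "a \<bullet> e \<ge> 0" using geK[OF pK[of "Suc j mod n"]] jk unfolding e_def
      by (simp add: inner_diff_right)
    moreover have "a \<bullet> f \<ge> 0" using geK[OF pK[of "Suc k mod n"]] jk unfolding f_def
      by (simp add: inner_diff_right)
    moreover have "cross2 e w > 0" using pf(3)[of j k] jk nadj that(3) unfolding e_def w_def by auto
    moreover have "cross2 f (- w) > 0" using pf(3)[of k j] jk nadj that(3) unfolding f_def w_def by auto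
    moreover have "a$1 \<noteq> 0 \<or> a$2 \<noteq> 0" using a0 by (metis exhaust_2 vec_eq_iff zero_index)
    ultimately show False
      by (intro adj_aux[of "a$1" "w$1" "a$2" "w$2" "e$1" "e$2" "f$1" "f$2"])
        (auto simp: inner_vec_def sum_2 cross2_def)
  qed
  have three: "J \<subseteq> {i, Suc i mod n}" if "i \<in> J" "Suc i mod n \<in> J" for i
  proof
    fix l assume l: "l \<in> J"
    show "l \<in> {i, Suc i mod n}"
    proof (rule ccontr)
      assume nl: "l \<notin> {i, Suc i mod n}"
      have il: "i < n" "l < n" using that l unfolding J_def by auto
      have "cross2 (p (Suc i mod n) - p i) (p l - p i) > 0" using pf(3)[OF il] nl by auto
      moreover have "cross2 (p (Suc i mod n) - p i) (p l - p i) = 0"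
        by (rule cross_perp[OF a0]) (use that l in \<open>auto simp: J_def inner_diff_right\<close>)
      ultimately show False by simp
    qed
  qed
  have "J \<noteq> {}" using mJ by auto
  then obtain j where jJ: "j \<in> J" by auto
  have jn: "j < n" using jJ unfolding J_def by auto
  have seg: "m \<in> closed_segment (p i) (p (Suc i mod n))" if "J \<subseteq> {i, Suc i mod n}" for i
  proof -
    have "p ` J \<subseteq> {p i, p (Suc i mod n)}" using that by auto
    then have "convex hull (p ` J) \<subseteq> convex hull {p i, p (Suc i mod n)}" by (rule hull_mono)
    then show ?thesis using mJ by (auto simp: segment_convex_hull)
  qed
  show ?thesis
  proof (cases "J \<subseteq> {j}")
    case True then show ?thesis using seg[of j] jn by blast
  next
    case False
    then obtain k where kJ: "k \<in> J" "k \<noteq> j" by auto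
    have kn: "k < n" using kJ unfolding J_def by auto
    have "k = Suc j mod n \<or> j = Suc k mod n" using adj[OF jJ kJ(1)] kJ(2) by auto
    then show ?thesis
    proof
      assume "k = Suc j mod n"
      then show ?thesis using seg[of j] three[of j] jJ kJ jn by auto
    next
      assume "j = Suc k mod n"
      then show ?thesis using seg[of k] three[of k] jJ kJ kn by auto
    qed
  qed
qed


lemma comb_aux:
  fixes t A1 A2 M :: real
  assumes "0 \<le> t" "t \<le> 1" "M = (1 - t) * A1 + t * A2"
  shows "A1 \<le> M \<or> A2 \<le> M"
proof (rule ccontr)
  assume "\<not> (A1 \<le> M \<or> A2 \<le> M)"
  then have h: "A1 - M > 0" "A2 - M > 0" by auto
  have "(1 - t) * (A1 - M) + t * (A2 - M) = 0" using assms(3) by (simp add: algebra_simps)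
  moreover have "(1 - t) * (A1 - M) \<ge> 0" using assms h by simp
  moreover have "t * (A2 - M) \<ge> 0" using assms h by simp
  ultimately have "(1 - t) * (A1 - M) = 0" "t * (A2 - M) = 0" by linarith+
  then show False using h by auto
qed

lemma det_zero_aux:
  fixes H :: "real^2^2" and d :: "real^2"
  assumes "d \<noteq> 0" "d$1 * H$1$1 + d$2 * H$2$1 = 0" "d$1 * H$1$2 + d$2 * H$2$2 = 0"
  shows "det H = 0"
proof -
  have "d$1 * (H$1$1 * H$2$2 - H$1$2 * H$2$1) = (d$1 * H$1$1 + d$2 * H$2$1) * H$2$2 - (d$1 * H$1$2 + d$2 * H$2$2) * H$2$1"
    by (simp add: algebra_simps)
  then have e1: "d$1 * (H$1$1 * H$2$2 - H$1$2 * H$2$1) = 0" using assms by simp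
  have "d$2 * (H$1$1 * H$2$2 - H$1$2 * H$2$1) = (d$1 * H$1$2 + d$2 * H$2$2) * H$1$1 - (d$1 * H$1$1 + d$2 * H$2$1) * H$1$2"
    by (simp add: algebra_simps)
  then have e2: "d$2 * (H$1$1 * H$2$2 - H$1$2 * H$2$1) = 0" using assms by simp
  have "d$1 \<noteq> 0 \<or> d$2 \<noteq> 0" using assms(1) by (metis exhaust_2 vec_eq_iff zero_index)
  then show ?thesis using e1 e2 by (auto simp: det_2)
qed

theorem mainTheorem7:
  fixes n :: nat and p :: "nat \<Rightarrow> real^2" and A :: real and b :: "nat \<Rightarrow> real"
    and \<phi> :: "real^2 \<Rightarrow> real" and U :: "(real^2) set"
  assumes poly: "ccw_convex_polygon n p"
    and U_def: "U = interior (convex hull (p ` {..<n}))"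
    and A: "A \<ge> 0"
    and cont: "continuous_on (closure U) \<phi>"
    and conv: "convex_on (closure U) \<phi>"
    and smooth: "smooth_on \<phi> U"
    and MA: "\<forall>u\<in>U. det (hessian2 \<phi> u) = A + (\<Sum>i<n. 1 / (2 * norm (u - p i)))"
    and vals: "\<forall>i<n. \<phi> (p i) = b i"
    and edges: "\<forall>i<n. \<exists>a c. \<forall>x\<in>closed_segment (p i) (p (Suc i mod n)). \<phi> x = inner a x + c"
  shows "grad2 \<phi> ` U = UNIV - (\<Union>i<n. subgrad_set \<phi> (closure U) (p i))"
proof -
  note pf = poly_facts[OF poly]
  define K where "K = convex hull (p ` {..<n})"
  have n0: "0 < n" using pf(1) by simp
  have openU: "open U" by (simp add: U_def)
  have notU: "\<And>k. k < n \<Longrightarrow> p k \<notin> U" using vertex_not_interior[OF poly] U_def by simp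
  show ?thesis
  proof (cases "U = {}")
    case True
    then have "subgrad_set \<phi> (closure U) (p 0) = UNIV" by (simp add: subgrad_set_def)
    then have "(\<Union>i<n. subgrad_set \<phi> (closure U) (p i)) = UNIV" using n0 by blast
    then show ?thesis using True by simp
  next
    case False
    have cK: "convex K" unfolding K_def by simp
    have compK: "compact K" unfolding K_def by (simp add: compact_convex_hull finite_imp_compact)
    have intK: "interior K \<noteq> {}" using False U_def K_def by simp
    have clU: "closure U = K"
      using convex_closure_interior[OF cK intK] compK U_def K_def
      by (simp add: compact_imp_closed closure_closed)
    have UK: "U \<subseteq> K" using U_def K_def interior_subset by blast
    have C2: "Ck_on (Suc (Suc 0)) \<phi> U" using smooth unfolding smooth_on_def by blast
    have diff: "\<And>u. u \<in> U \<Longrightarrow> \<phi> differentiable (at u)" using C2 by simp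
    have diff2: "\<And>u j. u \<in> U \<Longrightarrow> pderiv2 \<phi> j differentiable (at u)" using C2 by simp
    have conv': "convex_on K \<phi>" using conv clU by simp
    have sub1: "grad2 \<phi> ` U \<subseteq> UNIV - (\<Union>i<n. subgrad_set \<phi> (closure U) (p i))"
    proof
      fix z assume "z \<in> grad2 \<phi> ` U"
      then obtain u where u: "u \<in> U" "z = grad2 \<phi> u" by auto
      define y where "y = grad2 \<phi> u"
      have "y \<notin> subgrad_set \<phi> K (p i)" if i: "i < n" for i
      proof
        assume ys: "y \<in> subgrad_set \<phi> K (p i)"
        define \<psi> where "\<psi> x = \<phi> x - y \<bullet> x" for x
        have piK: "p i \<in> K" using i unfolding K_def by (simp add: hull_inc)
        have hmin: "\<forall>x\<in>K. \<psi> (p i) \<le> \<psi> x"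
          using ys unfolding subgrad_set_def \<psi>_def by (auto simp: inner_diff_right)
        have hu: "\<forall>x\<in>K. \<psi> u \<le> \<psi> x"
          using tangent[OF openU u(1) UK cK conv' diff[OF u(1)]] unfolding y_def \<psi>_def by auto
        have eq: "\<psi> u = \<psi> (p i)" using hmin hu piK UK u(1) by (meson antisym subsetD)
        define d where "d = p i - u"
        have d0: "d \<noteq> 0" using notU[OF i] u(1) unfolding d_def by auto
        have vK: "u + t *\<^sub>R d \<in> K" and vmin: "\<forall>x\<in>K. \<psi> (u + t *\<^sub>R d) \<le> \<psi> x"
          if t: "0 \<le> t" "t \<le> 1" for t
        proof -
          have e: "u + t *\<^sub>R d = (1 - t) *\<^sub>R u + t *\<^sub>R p i"
            unfolding d_def by (simp add: algebra_simps)
          show "u + t *\<^sub>R d \<in> K" unfolding e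
            using cK u(1) UK piK t by (meson convex_alt subsetD)
          have "\<phi> ((1 - t) *\<^sub>R u + t *\<^sub>R p i) \<le> (1 - t) * \<phi> u + t * \<phi> (p i)"
            using convex_onD[OF conv' t] u(1) UK piK by auto
          moreover have "y \<bullet> ((1 - t) *\<^sub>R u + t *\<^sub>R p i) = (1 - t) * (y \<bullet> u) + t * (y \<bullet> p i)"
            by (simp add: inner_add_right)
          ultimately have "\<psi> (u + t *\<^sub>R d) \<le> (1 - t) * \<psi> u + t * \<psi> (p i)"
            unfolding e \<psi>_def by (simp add: algebra_simps)
          also have "\<dots> = \<psi> u" using eq by (simp add: algebra_simps)
          finally show "\<forall>x\<in>K. \<psi> (u + t *\<^sub>R d) \<le> \<psi> x" using hu by auto
        qed
        have gradv: "grad2 \<phi> (u + t *\<^sub>R d) = y" if "0 \<le> t" "t \<le> 1" "u + t *\<^sub>R d \<in> U" for t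
          using interior_min[OF openU that(3) UK diff[OF that(3)]] vmin[OF that(1,2)]
          unfolding \<psi>_def by auto
        obtain r where r: "r > 0" "ball u r \<subseteq> U" using openU u(1) open_contains_ball by blast
        define t0 where "t0 = min (1/4) (r / (4 * norm d))"
        have nd: "norm d > 0" using d0 by simp
        have t0: "0 < t0" "t0 \<le> 1/4" using r nd by (auto simp: t0_def)
        have "t0 \<le> r / (4 * norm d)" by (simp add: t0_def)
        then have "t0 * norm d \<le> r / (4 * norm d) * norm d" by (rule mult_right_mono) simp
        also have "\<dots> = r / 4" using nd by (simp add: field_simps)
        finally have t0r: "t0 * norm d \<le> r / 4" .
        define v where "v = u + t0 *\<^sub>R d"
        have line: "grad2 \<phi> (v + s *\<^sub>R d) = y" if s: "\<bar>s\<bar> < t0" for s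
        proof -
          have e: "v + s *\<^sub>R d = u + (t0 + s) *\<^sub>R d" by (simp add: v_def algebra_simps)
          have ts: "0 \<le> t0 + s" "t0 + s \<le> 1" using s t0 by auto
          have "dist u (u + (t0 + s) *\<^sub>R d) = \<bar>t0 + s\<bar> * norm d" by (simp add: dist_norm)
          also have "\<dots> \<le> (2 * t0) * norm d" using s ts nd by (intro mult_right_mono) auto
          also have "\<dots> < r" using t0r r by simp
          finally have "u + (t0 + s) *\<^sub>R d \<in> U" using r(2) by auto
          then show ?thesis unfolding e using gradv ts by blast
        qed
        have vU: "v \<in> U"
        proof -
          have "dist u v = t0 * norm d" using t0 by (simp add: v_def dist_norm)
          also have "\<dots> < r" using t0r r by simp
          finally show ?thesis using r(2) by auto
        qed
        have hz: "d$1 * hessian2 \<phi> v $ 1 $ j + d$2 * hessian2 \<phi> v $ 2 $ j = 0" for j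
        proof -
          define Dj where "Dj = frechet_derivative (pderiv2 \<phi> j) (at v)"
          have Dj: "(pderiv2 \<phi> j has_derivative Dj) (at v)"
            unfolding Dj_def using diff2[OF vU] frechet_derivative_works by blast
          have dl: "((\<lambda>s. v + s *\<^sub>R d) has_derivative (\<lambda>s. s *\<^sub>R d)) (at 0)"
            by (auto intro!: derivative_eq_intros)
          have "(pderiv2 \<phi> j has_derivative Dj) (at ((\<lambda>s. v + s *\<^sub>R d) 0))" using Dj by simp
          with dl have hd: "((\<lambda>s. pderiv2 \<phi> j (v + s *\<^sub>R d)) has_derivative (\<lambda>s. Dj (s *\<^sub>R d))) (at 0)"
            by (rule has_derivative_compose)
          have ev: "eventually (\<lambda>s. pderiv2 \<phi> j (v + 0 *\<^sub>R d) \<le> pderiv2 \<phi> j (v + s *\<^sub>R d)) (at 0)"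
            unfolding eventually_at
          proof (intro exI[of _ t0] conjI ballI allI impI)
            show "0 < t0" using t0 by simp
            fix s :: real assume "s \<noteq> 0 \<and> dist s 0 < t0"
            then have "\<bar>s\<bar> < t0" by simp
            then have "grad2 \<phi> (v + s *\<^sub>R d) = y" "grad2 \<phi> (v + 0 *\<^sub>R d) = y"
              using line[of s] line[of 0] t0 by auto
            then show "pderiv2 \<phi> j (v + 0 *\<^sub>R d) \<le> pderiv2 \<phi> j (v + s *\<^sub>R d)"
              by (simp add: grad2_def vec_eq_iff)
          qed
          have "(\<lambda>s. Dj (s *\<^sub>R d)) = (\<lambda>s. 0)"
            by (rule has_derivative_local_min[OF hd ev])
          then have "Dj d = 0" by (metis scaleR_one)
          moreover have "Dj d = (\<chi> i. Dj (axis i 1)) \<bullet> d"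
            by (rule lin_inner2[OF has_derivative_linear[OF Dj]])
          moreover have "hessian2 \<phi> v $ i $ j = Dj (axis i 1)" for i
            by (simp add: hessian2_def pderiv2_def Dj_def)
          ultimately show ?thesis by (simp add: inner_vec_def sum_2 mult.commute)
        qed
        have "det (hessian2 \<phi> v) = 0" by (rule det_zero_aux[OF d0 hz hz])
        moreover have "det (hessian2 \<phi> v) > 0"
        proof -
          have "(\<Sum>i<n. 1 / (2 * norm (v - p i))) > 0"
          proof (rule sum_pos2[of _ 0])
            show "0 \<in> {..<n}" using n0 by simp
            have "v \<noteq> p 0" using notU[OF n0] vU by auto
            then show "0 < 1 / (2 * norm (v - p 0))" by simp
          qed auto
          then show ?thesis using MA vU A by auto
        qed
        ultimately show False by simp
      qed
      then show "z \<in> UNIV - (\<Union>i<n. subgrad_set \<phi> (closure U) (p i))"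
        using u y_def clU by auto
    qed
    have sub2: "UNIV - (\<Union>i<n. subgrad_set \<phi> (closure U) (p i)) \<subseteq> grad2 \<phi> ` U"
    proof
      fix y assume y: "y \<in> UNIV - (\<Union>i<n. subgrad_set \<phi> (closure U) (p i))"
      define \<psi> where "\<psi> x = \<phi> x - y \<bullet> x" for x
      have nsub: "\<not> (\<forall>x\<in>K. \<psi> (p i) \<le> \<psi> x)" if "i < n" for i
      proof
        assume "\<forall>x\<in>K. \<psi> (p i) \<le> \<psi> x"
        then have "y \<in> subgrad_set \<phi> K (p i)"
          unfolding subgrad_set_def \<psi>_def by (auto simp: inner_diff_right)
        then show False using y that clU by auto
      qed
      have "K \<noteq> {}" using False UK by auto
      moreover have "continuous_on K \<psi>" unfolding \<psi>_def using cont clU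
        by (auto intro!: continuous_intros)
      ultimately obtain m where m: "m \<in> K" "\<forall>x\<in>K. \<psi> m \<le> \<psi> x"
        using continuous_attains_inf[OF compK] by blast
      show "y \<in> grad2 \<phi> ` U"
      proof (cases "m \<in> U")
        case True
        then have "grad2 \<phi> m = y"
          using interior_min[OF openU True UK diff[OF True]] m(2) unfolding \<psi>_def by auto
        then show ?thesis using True by force
      next
        case False
        then have "m \<notin> interior K" using U_def K_def by simp
        then obtain i where i: "i < n" "m \<in> closed_segment (p i) (p (Suc i mod n))"
          using boundary_edge[OF poly] m(1) intK unfolding K_def by blast
        define i1 where "i1 = Suc i mod n"
        have i1: "i1 < n" using i(1) by (simp add: i1_def)
        obtain a c where aff: "\<forall>x\<in>closed_segment (p i) (p i1). \<phi> x = a \<bullet> x + c"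
          using edges i(1) unfolding i1_def by blast
        obtain t where t: "0 \<le> t" "t \<le> 1" "m = (1 - t) *\<^sub>R p i + t *\<^sub>R p i1"
          using i(2) unfolding closed_segment_def i1_def by blast
        have "\<psi> m = (a - y) \<bullet> m + c" using aff i(2) unfolding \<psi>_def i1_def
          by (simp add: inner_diff_left)
        also have "\<dots> = (1 - t) * ((a - y) \<bullet> p i + c) + t * ((a - y) \<bullet> p i1 + c)"
          unfolding t(3) by (simp add: inner_add_right algebra_simps)
        also have "(a - y) \<bullet> p i + c = \<psi> (p i)" using aff unfolding \<psi>_def
          by (simp add: inner_diff_left)
        also have "(a - y) \<bullet> p i1 + c = \<psi> (p i1)" using aff unfolding \<psi>_def
          by (simp add: inner_diff_left)
        finally have "\<psi> (p i) \<le> \<psi> m \<or> \<psi> (p i1) \<le> \<psi> m"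
          using comb_aux[OF t(1,2)] by blast
        then show ?thesis
        proof
          assume "\<psi> (p i) \<le> \<psi> m"
          then have "\<forall>x\<in>K. \<psi> (p i) \<le> \<psi> x" using m(2) by force
          then show ?thesis using nsub[OF i(1)] by blast
        next
          assume "\<psi> (p i1) \<le> \<psi> m"
          then have "\<forall>x\<in>K. \<psi> (p i1) \<le> \<psi> x" using m(2) by force
          then show ?thesis using nsub[OF i1] by blast
        qed
      qed
    qed
    from sub1 sub2 show ?thesis by blast
  qed
qed

end
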